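(* For integers $1\le k\le n$, let $h_{k|n}(p)=\sum_{i=k}^{n}\binom{n}{i}p^i(1-p)^{n-i}$, $p\in[0,1]$, be the reliability function of a $k$-out-of-$n$ system with i.i.d. components each of reliability $p$, and let $H_{k|n}(p)=p\,h_{k|n}'(p)/h_{k|n}(p)$ for $p\in(0,1)$. Then: (ii) for integers $1\le k\le n$ and $1\le l\le m$ with $k\le l$ and $m-l\le n-k$, the ratio $H_{k|n}(p)/H_{l|m}(p)$ is decreasing in $p\in(0,1)$; (iii) for $1\le k\le n$, the function $(1-p)\,H_{k|n}'(p)/H_{k|n}(p)$ is decreasing in $p\in(0,1)$.
   Context: "Increasing" means non-decreasing and "decreasing" means non-increasing. A $k$-out-of-$n$ system functions as long as at least $k$ of its $n$ components function. (Part (i) of this lemma in the paper, that $H_{k|n}$ is decreasing, is a cited result and is not included.) *)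

theory Defs
  imports "HOL-Analysis.Analysis"
begin

definition rel_h :: "nat \<Rightarrow> nat \<Rightarrow> real \<Rightarrow> real" where
  "rel_h k n p = (\<Sum>i=k..n. real (n choose i) * p ^ i * (1 - p) ^ (n - i))"

definition rel_H :: "nat \<Rightarrow> nat \<Rightarrow> real \<Rightarrow> real" where
  "rel_H k n p = p * deriv (rel_h k n) p / rel_h k n p"

end

theory Submission imports Defs begin

definition ca :: "nat \<Rightarrow> nat \<Rightarrow> real" where
  "ca K j = real (K + j choose j)"

definition Sp :: "nat \<Rightarrow> nat \<Rightarrow> real \<Rightarrow> real" where
  "Sp K d q = (\<Sum>j\<le>d. ca K j * q ^ j)"

definition Rp :: "nat \<Rightarrow> nat \<Rightarrow> real \<Rightarrow> real" where
  "Rp K d s = (\<Sum>i\<le>d. ca K (d - i) * s ^ i)"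

lemma ca_pos: "ca K j > 0"
  by (simp add: ca_def)

lemma ca_Suc: "ca K (Suc j) * real (Suc j) = ca K j * real (Suc K + j)"
proof -
  have "Suc (K + j) * (K + j choose j) = (Suc (K + j) choose Suc j) * Suc j"
    by (rule Suc_times_binomial_eq)
  then have "real (Suc (K + j)) * real (K + j choose j) = real (Suc (K + j) choose Suc j) * real (Suc j)"
    by (metis of_nat_mult)
  then show ?thesis by (simp add: ca_def algebra_simps)
qed

lemma rel_h_Suc:
  assumes "k \<ge> 1" "k \<le> Suc n"
  shows "rel_h k (Suc n) p = rel_h k n p + real (n choose (k - 1)) * p ^ k * (1 - p) ^ (Suc n - k)"
proof -
  obtain K where kK: "k = Suc K" using assms(1) by (cases k) auto
  have Kn: "K \<le> n" using assms kK by simp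
  define q where "q = 1 - p"
  have "rel_h k (Suc n) p = (\<Sum>i=K..n. real (Suc n choose Suc i) * p ^ Suc i * q ^ (n - i))"
    unfolding rel_h_def kK q_def by (subst sum.shift_bounds_cl_Suc_ivl) simp
  also have "\<dots> = (\<Sum>i=K..n. real (n choose i) * p ^ Suc i * q ^ (n - i))
                  + (\<Sum>i=K..n. real (n choose Suc i) * p ^ Suc i * q ^ (n - i))"
    by (simp add: sum.distrib[symmetric] algebra_simps)
  also have "(\<Sum>i=K..n. real (n choose i) * p ^ Suc i * q ^ (n - i)) = p * rel_h K n p"
    unfolding rel_h_def q_def by (simp add: sum_distrib_left algebra_simps)
  also have "rel_h K n p = real (n choose K) * p ^ K * q ^ (n - K) + rel_h k n p"
    unfolding rel_h_def q_def kK using Kn by (simp add: sum.atLeast_Suc_atMost)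
  also have "(\<Sum>i=K..n. real (n choose Suc i) * p ^ Suc i * q ^ (n - i))
       = (\<Sum>i=k..Suc n. real (n choose i) * p ^ i * q ^ (Suc n - i))"
    unfolding kK by (subst sum.shift_bounds_cl_Suc_ivl) simp
  also have "\<dots> = (\<Sum>i=k..n. real (n choose i) * p ^ i * q ^ (Suc n - i))"
    using assms by (simp add: sum.cl_ivl_Suc)
  also have "\<dots> = q * rel_h k n p"
    unfolding rel_h_def q_def sum_distrib_left
    by (rule sum.cong) (auto simp: Suc_diff_le algebra_simps)
  finally show ?thesis unfolding q_def kK by (simp add: algebra_simps)
qed

lemma rel_h_closed: "rel_h (Suc K) (Suc K + d) p = p ^ Suc K * Sp K d (1 - p)"
proof (induction d)
  case 0
  then show ?case by (simp add: rel_h_def Sp_def ca_def)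
next
  case (Suc d)
  have "rel_h (Suc K) (Suc K + Suc d) p = rel_h (Suc K) (Suc (Suc K + d)) p" by simp
  also have "\<dots> = rel_h (Suc K) (Suc K + d) p + real (Suc K + d choose K) * p ^ Suc K * (1 - p) ^ Suc d"
    by (subst rel_h_Suc) auto
  also have "real (Suc K + d choose K) = ca K (Suc d)"
    unfolding ca_def by (metis add_Suc_right add_Suc_shift add_diff_cancel_left' binomial_symmetric le_add1)
  finally show ?case using Suc by (simp add: Sp_def algebra_simps)
qed

lemma Sp_deriv:
  "((\<lambda>p. p ^ Suc K * Sp K d (1 - p)) has_real_derivative
     real (Suc K + d) * ca K d * p ^ K * (1 - p) ^ d) (at p)"
proof (induction d)
  case 0
  show ?case using DERIV_pow[of "Suc K" p] by (simp add: Sp_def ca_def)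
next
  case (Suc d)
  have eq: "(\<lambda>p. p ^ Suc K * Sp K (Suc d) (1 - p)) = (\<lambda>p. p ^ Suc K * Sp K d (1 - p) + ca K (Suc d) * (p ^ Suc K * (1 - p) ^ Suc d))"
    by (simp add: Sp_def algebra_simps)
  have "((\<lambda>p. p ^ Suc K * Sp K d (1 - p) + ca K (Suc d) * (p ^ Suc K * (1 - p) ^ Suc d)) has_real_derivative
     real (Suc K + d) * ca K d * p ^ K * (1 - p) ^ d + ca K (Suc d) * (real (Suc K) * p ^ K * (1 - p) ^ Suc d - p ^ Suc K * (real (Suc d) * (1 - p) ^ d))) (at p)"
    by (rule derivative_eq_intros Suc refl)+ (simp add: algebra_simps)
  moreover have "real (Suc K + d) * ca K d * p ^ K * (1 - p) ^ d + ca K (Suc d) * (real (Suc K) * p ^ K * (1 - p) ^ Suc d - p ^ Suc K * (real (Suc d) * (1 - p) ^ d))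
      = real (Suc K + Suc d) * ca K (Suc d) * p ^ K * (1 - p) ^ Suc d"
  proof -
    have c: "ca K d * real (Suc K + d) = ca K (Suc d) * real (Suc d)" using ca_Suc by simp
    have "real (Suc K + d) * ca K d * p ^ K * (1 - p) ^ d = ca K (Suc d) * real (Suc d) * p ^ K * (1 - p) ^ d"
      using c by (simp add: algebra_simps)
    then show ?thesis by (simp add: algebra_simps)
  qed
  ultimately show ?case unfolding eq by simp
qed


lemma Rp_pos: "s > 0 \<Longrightarrow> Rp K d s > 0"
  unfolding Rp_def
  by (rule sum_pos2[of _ 0]) (auto intro!: ca_pos mult_nonneg_nonneg less_imp_le[OF ca_pos])

lemma Sp_Rp:
  assumes "q > 0"
  shows "Sp K d q = q ^ d * Rp K d (1 / q)"
proof -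
  have "q ^ d * Rp K d (1 / q) = (\<Sum>i\<le>d. ca K (d - i) * q ^ (d - i))"
    unfolding Rp_def sum_distrib_left
    by (rule sum.cong) (use assms in \<open>auto simp: power_diff power_one_over\<close>)
  also have "\<dots> = Sp K d q"
    unfolding Sp_def atMost_atLeast0
    by (subst sum.atLeastAtMost_rev) simp
  finally show ?thesis by simp
qed

lemma deriv_rel_h:
  "deriv (rel_h (Suc K) (Suc K + d)) p = real (Suc K + d) * ca K d * p ^ K * (1 - p) ^ d"
proof -
  have "rel_h (Suc K) (Suc K + d) = (\<lambda>p. p ^ Suc K * Sp K d (1 - p))"
    using rel_h_closed by auto
  then show ?thesis using Sp_deriv by (simp add: DERIV_imp_deriv)
qed

lemma rel_H_closed:
  assumes "0 < p" "p < 1"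
  shows "rel_H (Suc K) (Suc K + d) p = real (Suc K + d) * ca K d / Rp K d (1 / (1 - p))"
proof -
  have q: "1 - p > 0" using assms by simp
  have R: "Rp K d (1 / (1 - p)) > 0" using q Rp_pos by simp
  show ?thesis
    unfolding rel_H_def deriv_rel_h rel_h_closed Sp_Rp[OF q]
    using assms q R by (simp add: field_simps)
qed


lemma step_ii:
  assumes KL: "K \<le> L" and d: "d2 \<le> d1" and i: "i < d1"
  shows "(if Suc i \<le> d2 then ca L (d2 - Suc i) else 0) * ca K (d1 - i)
         \<le> (if i \<le> d2 then ca L (d2 - i) else 0) * ca K (d1 - Suc i)"
proof (cases "Suc i \<le> d2")
  case False
  then show ?thesis using less_imp_le[OF ca_pos] by (simp add: mult_nonneg_nonneg)
next
  case True
  define j where "j = d1 - Suc i"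
  define j' where "j' = d2 - Suc i"
  have jj: "j' \<le> j" using d True unfolding j_def j'_def by simp
  have e1: "d1 - i = Suc j" using i unfolding j_def by simp
  have e2: "d2 - i = Suc j'" using True unfolding j'_def by simp
  have nat: "(Suc K + j) * (Suc j') \<le> (Suc L + j') * (Suc j)"
  proof -
    have "K * j' \<le> L * j" using KL jj by (intro mult_le_mono) auto
    then show ?thesis using KL jj by (simp add: algebra_simps)
  qed
  then have natr: "real (Suc K + j) * real (Suc j') \<le> real (Suc L + j') * real (Suc j)"
    by (metis of_nat_le_iff of_nat_mult)
  have "ca L j' * ca K (Suc j) * (real (Suc j) * real (Suc j'))
      = (ca L j' * real (Suc j')) * (ca K (Suc j) * real (Suc j))" by (simp only: mult_ac)
  also have "\<dots> = (ca L j' * real (Suc j')) * (ca K j * real (Suc K + j))" by (simp only: ca_Suc)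
  also have "\<dots> = ca L j' * ca K j * (real (Suc K + j) * real (Suc j'))" by (simp only: mult_ac)
  also have "\<dots> \<le> ca L j' * ca K j * (real (Suc L + j') * real (Suc j))"
    using natr ca_pos[of L j'] ca_pos[of K j] by (intro mult_left_mono) auto
  also have "\<dots> = (ca L j' * real (Suc L + j')) * (ca K j * real (Suc j))" by (simp only: mult_ac)
  also have "\<dots> = (ca L (Suc j') * real (Suc j')) * (ca K j * real (Suc j))" by (simp only: ca_Suc)
  also have "\<dots> = ca L (Suc j') * ca K j * (real (Suc j) * real (Suc j'))" by (simp only: mult_ac)
  finally have "ca L j' * ca K (Suc j) \<le> ca L (Suc j') * ca K j"
    by (simp del: of_nat_Suc)
  then show ?thesis using True by (simp add: e1 e2 j_def[symmetric] j'_def[symmetric])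
qed


lemma term_deriv:
  assumes q: "1 - p \<noteq> (0::real)"
  shows "((\<lambda>p. c * (1 / (1 - p)) ^ i) has_real_derivative
           c * real i * (1 / (1 - p)) ^ i / (1 - p)) (at p)"
proof -
  have "((\<lambda>p. c * (1 / (1 - p)) ^ i) has_real_derivative
           c * (real i * (1 / (1 - p)) ^ (i - 1) * (0 * (1 - p) - 1 * (0 - 1)) / (1 - p)^2)) (at p)"
    by (intro derivative_eq_intros) (use q in \<open>auto simp: power2_eq_square\<close>)
  moreover have "c * (real i * (1 / (1 - p)) ^ (i - 1) * (0 * (1 - p) - 1 * (0 - 1)) / (1 - p)^2)
     = c * real i * (1 / (1 - p)) ^ i / (1 - p)"
  proof (cases i)
    case (Suc i') then show ?thesis using q by (simp add: field_simps power_Suc power2_eq_square)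
  qed simp
  ultimately show ?thesis by simp
qed

definition Tp :: "nat \<Rightarrow> nat \<Rightarrow> real \<Rightarrow> real" where
  "Tp K d s = (\<Sum>i\<le>d. ca K (d - i) * real i * s ^ i)"

lemma Rp_comp_deriv:
  assumes "p < 1"
  shows "((\<lambda>p. Rp K d (1 / (1 - p))) has_real_derivative Tp K d (1 / (1 - p)) / (1 - p)) (at p)"
proof -
  have q: "1 - p \<noteq> 0" using assms by simp
  have "((\<lambda>p. \<Sum>i\<le>d. ca K (d - i) * (1 / (1 - p)) ^ i) has_real_derivative
           (\<Sum>i\<le>d. ca K (d - i) * real i * (1 / (1 - p)) ^ i / (1 - p))) (at p)"
    by (rule DERIV_sum) (rule term_deriv[OF q])
  then show ?thesis unfolding Rp_def Tp_def by (simp add: sum_divide_distrib)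
qed

lemma deriv_rel_H:
  assumes "0 < p" "p < 1"
  shows "deriv (rel_H (Suc K) (Suc K + d)) p
     = - (real (Suc K + d) * ca K d) * (Tp K d (1 / (1 - p)) / (1 - p)) / (Rp K d (1 / (1 - p)))^2"
proof -
  define c where "c = real (Suc K + d) * ca K d"
  have R: "Rp K d (1 / (1 - p)) > 0" using assms Rp_pos by simp
  have "((\<lambda>p. c / Rp K d (1 / (1 - p))) has_real_derivative
     (0 * Rp K d (1 / (1 - p)) - c * (Tp K d (1 / (1 - p)) / (1 - p))) / (Rp K d (1 / (1 - p)) * Rp K d (1 / (1 - p)))) (at p)"
    by (rule DERIV_divide[OF DERIV_const Rp_comp_deriv]) (use assms R in auto)
  then have "(rel_H (Suc K) (Suc K + d) has_real_derivative
     (0 * Rp K d (1 / (1 - p)) - c * (Tp K d (1 / (1 - p)) / (1 - p))) / (Rp K d (1 / (1 - p)) * Rp K d (1 / (1 - p)))) (at p)"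
    by (rule has_field_derivative_transform_within_open[where S="{0<..<1}"])
       (use assms rel_H_closed[of _ K d] in \<open>auto simp: c_def\<close>)
  then show ?thesis unfolding c_def by (simp add: DERIV_imp_deriv power2_eq_square)
qed

lemma alg: "(c::real) > 0 \<Longrightarrow> r > 0 \<Longrightarrow> q > 0 \<Longrightarrow> q * (- c * (t / q) / r^2) / (c / r) = - t / r"
  by (simp add: field_simps power2_eq_square)

lemma iii_formula:
  assumes "0 < p" "p < 1"
  shows "(1 - p) * deriv (rel_H (Suc K) (Suc K + d)) p / rel_H (Suc K) (Suc K + d) p
     = (\<Sum>i\<le>d. - (real i * ca K (d - i)) * (1 / (1 - p)) ^ i) / (\<Sum>i\<le>d. ca K (d - i) * (1 / (1 - p)) ^ i)"
proof -
  have R: "Rp K d (1 / (1 - p)) > 0" using assms Rp_pos by simp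
  have c: "real (Suc K + d) * ca K d > 0" using ca_pos by simp
  have "(1 - p) * deriv (rel_H (Suc K) (Suc K + d)) p / rel_H (Suc K) (Suc K + d) p
     = - Tp K d (1 / (1 - p)) / Rp K d (1 / (1 - p))"
    unfolding deriv_rel_H[OF assms] rel_H_closed[OF assms]
    by (rule alg) (use assms R c in auto)
  also have "\<dots> = (\<Sum>i\<le>d. - (real i * ca K (d - i)) * (1 / (1 - p)) ^ i) / (\<Sum>i\<le>d. ca K (d - i) * (1 / (1 - p)) ^ i)"
    unfolding Tp_def Rp_def by (simp add: sum_negf[symmetric] algebra_simps)
  finally show ?thesis .
qed

lemma chain_ratio:
  fixes a b :: "nat \<Rightarrow> real"
  assumes apos: "\<And>i. i \<le> D \<Longrightarrow> a i > 0"
    and step: "\<And>i. i < D \<Longrightarrow> b (Suc i) * a i \<le> b i * a (Suc i)"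
    and ij: "i \<le> j" "j \<le> D"
  shows "b j * a i \<le> b i * a j"
proof -
  have "b j / a j \<le> b i / a i" using ij
  proof (induction j rule: dec_induct)
    case base then show ?case by simp
  next
    case (step j)
    have "b (Suc j) * a j \<le> b j * a (Suc j)" using step.prems step.hyps by (intro assms(2)) simp
    then have "b (Suc j) / a (Suc j) \<le> b j / a j"
      using apos[of j] apos[of "Suc j"] step.prems step.hyps by (simp add: divide_simps mult.commute)
    then show ?case using step by simp
  qed
  then show ?thesis using apos[of i] apos[of j] ij by (simp add: divide_simps mult.commute)
qed

lemma pow_cross:
  fixes x y :: real
  assumes "0 < x" "x \<le> y" "i \<le> j"
  shows "x ^ j * y ^ i \<le> x ^ i * y ^ j"
proof -
  obtain t where j: "j = i + t" using assms(3) le_Suc_ex by blast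
  have "x ^ t \<le> y ^ t" using assms by (intro power_mono) auto
  then have "x ^ i * y ^ i * x ^ t \<le> x ^ i * y ^ i * y ^ t"
    using assms by (intro mult_left_mono) auto
  then show ?thesis unfolding j by (simp add: power_add algebra_simps)
qed

lemma ratio_antimono:
  fixes a b :: "nat \<Rightarrow> real"
  assumes apos: "\<And>i. i \<le> D \<Longrightarrow> a i > 0"
    and step: "\<And>i. i < D \<Longrightarrow> b (Suc i) * a i \<le> b i * a (Suc i)"
    and xy: "0 < x" "x \<le> y"
  shows "(\<Sum>i\<le>D. b i * y ^ i) / (\<Sum>i\<le>D. a i * y ^ i) \<le> (\<Sum>i\<le>D. b i * x ^ i) / (\<Sum>i\<le>D. a i * x ^ i)"
proof -
  have y: "0 < y" using xy by simp
  have Ax: "(\<Sum>i\<le>D. a i * x ^ i) > 0"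
    by (rule sum_pos2[of _ 0]) (use apos xy in \<open>auto intro!: less_imp_le\<close>)
  have Ay: "(\<Sum>i\<le>D. a i * y ^ i) > 0"
    by (rule sum_pos2[of _ 0]) (use apos y in \<open>auto intro!: less_imp_le\<close>)
  define f where "f i j = (b i * a j - b j * a i) * (x ^ i * y ^ j)" for i j
  have fpair: "f i j + f j i \<ge> 0" if "i \<le> D" "j \<le> D" for i j
  proof -
    have e: "f i j + f j i = (b i * a j - b j * a i) * (x ^ i * y ^ j - x ^ j * y ^ i)"
      unfolding f_def by (simp add: algebra_simps)
    show ?thesis
    proof (cases "i \<le> j")
      case True
      then show ?thesis unfolding e using chain_ratio[of D a b i j, OF apos step True that(2)] pow_cross[OF xy True]
        by (intro mult_nonneg_nonneg) auto
    next
      case False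
      then have ji: "j \<le> i" by simp
      then show ?thesis unfolding e using chain_ratio[of D a b j i, OF apos step ji that(1)] pow_cross[OF xy ji]
        by (intro mult_nonpos_nonpos) auto
    qed
  qed
  have "(\<Sum>i\<le>D. b i * x ^ i) * (\<Sum>j\<le>D. a j * y ^ j) - (\<Sum>j\<le>D. b j * y ^ j) * (\<Sum>i\<le>D. a i * x ^ i)
      = (\<Sum>i\<le>D. \<Sum>j\<le>D. f i j)"
  proof -
    have 1: "(\<Sum>i\<le>D. b i * x ^ i) * (\<Sum>j\<le>D. a j * y ^ j) = (\<Sum>i\<le>D. \<Sum>j\<le>D. b i * a j * (x ^ i * y ^ j))"
      unfolding sum_product by (simp add: algebra_simps)
    have 2: "(\<Sum>j\<le>D. b j * y ^ j) * (\<Sum>i\<le>D. a i * x ^ i) = (\<Sum>i\<le>D. \<Sum>j\<le>D. b j * a i * (x ^ i * y ^ j))"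
      unfolding sum_product by (subst sum.swap) (simp add: algebra_simps)
    show ?thesis unfolding 1 2 f_def sum_subtractf[symmetric] by (simp add: algebra_simps)
  qed
  moreover have "(\<Sum>i\<le>D. \<Sum>j\<le>D. f i j) \<ge> 0"
  proof -
    have "2 * (\<Sum>i\<le>D. \<Sum>j\<le>D. f i j) = (\<Sum>i\<le>D. \<Sum>j\<le>D. f i j) + (\<Sum>i\<le>D. \<Sum>j\<le>D. f j i)"
      by (subst (2) sum.swap) simp
    also have "\<dots> = (\<Sum>i\<le>D. \<Sum>j\<le>D. f i j + f j i)"
      by (simp add: sum.distrib)
    also have "\<dots> \<ge> 0" by (intro sum_nonneg fpair) auto
    finally show ?thesis by simp
  qed
  ultimately show ?thesis using Ax Ay by (simp add: divide_simps)
qed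

lemma Rp_ext:
  assumes "d2 \<le> d1"
  shows "Rp L d2 s = (\<Sum>i\<le>d1. (if i \<le> d2 then ca L (d2 - i) else 0) * s ^ i)"
proof -
  have "(\<Sum>i\<le>d1. (if i \<le> d2 then ca L (d2 - i) else 0) * s ^ i)
      = (\<Sum>i\<in>{..d1}. if i \<in> {..d2} then ca L (d2 - i) * s ^ i else 0)"
    by (rule sum.cong) auto
  also have "\<dots> = (\<Sum>i\<in>{..d1} \<inter> {..d2}. ca L (d2 - i) * s ^ i)"
    by (rule sum.inter_restrict[symmetric]) simp
  also have "{..d1} \<inter> {..d2} = {..d2}" using assms by auto
  finally show ?thesis unfolding Rp_def by simp
qed

lemma s_mono: "0 < p1 \<Longrightarrow> p1 \<le> p2 \<Longrightarrow> p2 < 1 \<Longrightarrow> 0 < 1 / (1 - p1) \<and> 1 / (1 - p1) \<le> 1 / (1 - (p2::real))"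
  by (auto simp: divide_simps)

lemma part_ii:
  assumes "1 \<le> k" "k \<le> n" "1 \<le> l" "l \<le> m" "k \<le> l" "m - l \<le> n - k"
  shows "antimono_on {0<..<1} (\<lambda>p. rel_H k n p / rel_H l m p)"
proof -
  obtain K where K: "k = Suc K" using assms by (cases k) auto
  obtain L where L: "l = Suc L" using assms by (cases l) auto
  define d1 where "d1 = n - k"
  define d2 where "d2 = m - l"
  have n: "n = Suc K + d1" "m = Suc L + d2" using assms K L unfolding d1_def d2_def by auto
  have d: "d2 \<le> d1" and KL: "K \<le> L" using assms K L unfolding d1_def d2_def by auto
  define c1 where "c1 = real (Suc K + d1) * ca K d1"
  define c2 where "c2 = real (Suc L + d2) * ca L d2"
  define b where "b i = (if i \<le> d2 then ca L (d2 - i) else 0)" for i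
  define a where "a i = ca K (d1 - i)" for i
  have c1: "c1 > 0" and c2: "c2 > 0" unfolding c1_def c2_def using ca_pos by auto
  have F: "rel_H k n p / rel_H l m p = c1 / c2 * ((\<Sum>i\<le>d1. b i * (1 / (1 - p)) ^ i) / (\<Sum>i\<le>d1. a i * (1 / (1 - p)) ^ i))"
    if "0 < p" "p < 1" for p
  proof -
    have R1: "Rp K d1 (1 / (1 - p)) > 0" and R2: "Rp L d2 (1 / (1 - p)) > 0" using that Rp_pos by auto
    have "rel_H k n p / rel_H l m p = c1 / c2 * (Rp L d2 (1 / (1 - p)) / Rp K d1 (1 / (1 - p)))"
      unfolding n K L rel_H_closed[OF that] c1_def c2_def using R1 R2 by (simp add: field_simps)
    also have "Rp L d2 (1 / (1 - p)) = (\<Sum>i\<le>d1. b i * (1 / (1 - p)) ^ i)"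
      unfolding b_def by (rule Rp_ext[OF d])
    also have "Rp K d1 (1 / (1 - p)) = (\<Sum>i\<le>d1. a i * (1 / (1 - p)) ^ i)"
      unfolding a_def Rp_def ..
    finally show ?thesis .
  qed
  show ?thesis unfolding monotone_on_def
  proof (intro ballI impI)
    fix p1 p2 :: real assume p1: "p1 \<in> {0<..<1}" and p2: "p2 \<in> {0<..<1}" and le: "p1 \<le> p2"
    have s: "0 < 1 / (1 - p1)" "1 / (1 - p1) \<le> 1 / (1 - p2)" using s_mono[of p1 p2] p1 p2 le by auto
    have "(\<Sum>i\<le>d1. b i * (1 / (1 - p2)) ^ i) / (\<Sum>i\<le>d1. a i * (1 / (1 - p2)) ^ i)
        \<le> (\<Sum>i\<le>d1. b i * (1 / (1 - p1)) ^ i) / (\<Sum>i\<le>d1. a i * (1 / (1 - p1)) ^ i)"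
    proof (rule ratio_antimono[OF _ _ s])
      show "\<And>i. i \<le> d1 \<Longrightarrow> 0 < a i" unfolding a_def using ca_pos by auto
      show "\<And>i. i < d1 \<Longrightarrow> b (Suc i) * a i \<le> b i * a (Suc i)"
        unfolding a_def b_def by (rule step_ii[OF KL d])
    qed
    then have "c1 / c2 * ((\<Sum>i\<le>d1. b i * (1 / (1 - p2)) ^ i) / (\<Sum>i\<le>d1. a i * (1 / (1 - p2)) ^ i))
        \<le> c1 / c2 * ((\<Sum>i\<le>d1. b i * (1 / (1 - p1)) ^ i) / (\<Sum>i\<le>d1. a i * (1 / (1 - p1)) ^ i))"
      by (rule mult_left_mono) (use c1 c2 in simp)
    moreover have "0 < p1" "p1 < 1" "0 < p2" "p2 < 1" using p1 p2 by auto
    ultimately show "rel_H k n p2 / rel_H l m p2 \<le> rel_H k n p1 / rel_H l m p1"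
      by (simp only: F)
  qed
qed

lemma part_iii:
  assumes "1 \<le> k" "k \<le> n"
  shows "antimono_on {0<..<1} (\<lambda>p. (1 - p) * deriv (rel_H k n) p / rel_H k n p)"
proof -
  obtain K where K: "k = Suc K" using assms by (cases k) auto
  define d where "d = n - k"
  have n: "n = Suc K + d" using assms K unfolding d_def by auto
  show ?thesis unfolding monotone_on_def
  proof (intro ballI impI)
    fix p1 p2 :: real assume p1: "p1 \<in> {0<..<1}" and p2: "p2 \<in> {0<..<1}" and le: "p1 \<le> p2"
    have s: "0 < 1 / (1 - p1)" "1 / (1 - p1) \<le> 1 / (1 - p2)" using s_mono[of p1 p2] p1 p2 le by auto
    have "(\<Sum>i\<le>d. - (real i * ca K (d - i)) * (1 / (1 - p2)) ^ i) / (\<Sum>i\<le>d. ca K (d - i) * (1 / (1 - p2)) ^ i)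
        \<le> (\<Sum>i\<le>d. - (real i * ca K (d - i)) * (1 / (1 - p1)) ^ i) / (\<Sum>i\<le>d. ca K (d - i) * (1 / (1 - p1)) ^ i)"
    proof (rule ratio_antimono[OF _ _ s])
      show "\<And>i. i \<le> d \<Longrightarrow> 0 < ca K (d - i)" using ca_pos by auto
      fix i
      have "real i * (ca K (d - i) * ca K (d - Suc i)) \<le> real (Suc i) * (ca K (d - i) * ca K (d - Suc i))"
        using ca_pos[of K "d - i"] ca_pos[of K "d - Suc i"] by (intro mult_right_mono) auto
      then show "- (real (Suc i) * ca K (d - Suc i)) * ca K (d - i) \<le> - (real i * ca K (d - i)) * ca K (d - Suc i)"
        by (simp add: algebra_simps)
    qed
    then show "(1 - p2) * deriv (rel_H k n) p2 / rel_H k n p2 \<le> (1 - p1) * deriv (rel_H k n) p1 / rel_H k n p1"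
      using iii_formula[of p1 K d] iii_formula[of p2 K d] p1 p2 unfolding n K by simp
  qed
qed

theorem lemma2p3:
  shows "(\<forall>k n l m :: nat. 1 \<le> k \<and> k \<le> n \<and> 1 \<le> l \<and> l \<le> m \<and> k \<le> l \<and> m - l \<le> n - k
            \<longrightarrow> antimono_on {0<..<1} (\<lambda>p. rel_H k n p / rel_H l m p))
       \<and> (\<forall>k n :: nat. 1 \<le> k \<and> k \<le> n
            \<longrightarrow> antimono_on {0<..<1} (\<lambda>p. (1 - p) * deriv (rel_H k n) p / rel_H k n p))"
  using part_ii part_iii by blast

end
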